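(* Let $q$ be an odd prime power, let $d \geq 1$ and $n \geq 2$ be integers, and let $M_n(\mathbb{F}_q)$ denote the set of $n \times n$ matrices with entries in the finite field $\mathbb{F}_q$. Let $\mathcal{A}_1,\dots,\mathcal{A}_d,\mathcal{B}_1,\dots,\mathcal{B}_d,\mathcal{E},\mathcal{F} \subset M_n(\mathbb{F}_q)$, and let $N$ be the number of tuples $(A_1,\dots,A_d,B_1,\dots,B_d,E,F)$ with $A_i \in \mathcal{A}_i$, $B_i \in \mathcal{B}_i$ ($1 \le i \le d$), $E \in \mathcal{E}$, $F \in \mathcal{F}$ satisfying \[ A_1B_1 + A_2B_2 + \dots + A_dB_d = E + F. \] Then \[ \left| N - \frac{|\mathcal{E}||\mathcal{F}|\prod_{i=1}^d |\mathcal{A}_i||\mathcal{B}_i|}{q^{n^2}} \right| \ll q^{dn^2 - (d-1)n/2 - 1/2} \sqrt{|\mathcal{E}||\mathcal{F}|\prod_{i=1}^d|\mathcal{A}_i||\mathcal{B}_i|}. \]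
   Context: The notation $X \ll Y$ means $X \le C\,Y$ for some positive constant $C$ depending only on $d$ and $n$ (not on $q$ or on the sets). *)

theory Defs
  imports "HOL-Algebra.Algebra" "HOL-Library.FuncSet"
begin

type_synonym 'a mat = "nat \<Rightarrow> nat \<Rightarrow> 'a"

definition mat_set :: "('a, 'm) ring_scheme \<Rightarrow> nat \<Rightarrow> 'a mat set" where
  "mat_set R n = {0..<n} \<rightarrow>\<^sub>E ({0..<n} \<rightarrow>\<^sub>E carrier R)"

definition mat_zero :: "('a, 'm) ring_scheme \<Rightarrow> nat \<Rightarrow> 'a mat" where
  "mat_zero R n = (\<lambda>i\<in>{0..<n}. \<lambda>j\<in>{0..<n}. \<zero>\<^bsub>R\<^esub>)"

definition mat_add :: "('a, 'm) ring_scheme \<Rightarrow> nat \<Rightarrow> 'a mat \<Rightarrow> 'a mat \<Rightarrow> 'a mat" where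
  "mat_add R n A B = (\<lambda>i\<in>{0..<n}. \<lambda>j\<in>{0..<n}. A i j \<oplus>\<^bsub>R\<^esub> B i j)"

definition mat_mult :: "('a, 'm) ring_scheme \<Rightarrow> nat \<Rightarrow> 'a mat \<Rightarrow> 'a mat \<Rightarrow> 'a mat" where
  "mat_mult R n A B = (\<lambda>i\<in>{0..<n}. \<lambda>j\<in>{0..<n}.
      finsum R (\<lambda>k. A i k \<otimes>\<^bsub>R\<^esub> B k j) {0..<n})"

fun mat_sum :: "('a, 'm) ring_scheme \<Rightarrow> nat \<Rightarrow> (nat \<Rightarrow> 'a mat) \<Rightarrow> nat \<Rightarrow> 'a mat" where
  "mat_sum R n M 0 = mat_zero R n"
| "mat_sum R n M (Suc d) = mat_add R n (mat_sum R n M d) (M d)"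

end

theory Submission imports Defs begin

lemma my_CS:
  fixes a b :: "'i \<Rightarrow> real"
  shows "(\<Sum>i\<in>A. a i * b i)^2 \<le> (\<Sum>i\<in>A. (a i)^2) * (\<Sum>i\<in>A. (b i)^2)"
proof -
  have "0 \<le> (\<Sum>i\<in>A. \<Sum>j\<in>A. (a i * b j - a j * b i)^2)"
    by (intro sum_nonneg) auto
  also have "(\<Sum>i\<in>A. \<Sum>j\<in>A. (a i * b j - a j * b i)^2)
      = (\<Sum>i\<in>A. \<Sum>j\<in>A. (a i)^2 * (b j)^2 + (a j)^2 * (b i)^2 - 2 * ((a i * b i) * (a j * b j)))"
    by (intro sum.cong refl) (simp add: power2_eq_square algebra_simps)
  also have "\<dots> = (\<Sum>i\<in>A. \<Sum>j\<in>A. (a i)^2 * (b j)^2) + (\<Sum>i\<in>A. \<Sum>j\<in>A. (a j)^2 * (b i)^2)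
      - 2 * (\<Sum>i\<in>A. \<Sum>j\<in>A. (a i * b i) * (a j * b j))"
    by (simp add: sum.distrib sum_subtractf sum_distrib_left)
  also have "(\<Sum>i\<in>A. \<Sum>j\<in>A. (a i)^2 * (b j)^2) = (\<Sum>i\<in>A. (a i)^2) * (\<Sum>i\<in>A. (b i)^2)"
    by (simp add: sum_product)
  also have "(\<Sum>i\<in>A. \<Sum>j\<in>A. (a j)^2 * (b i)^2) = (\<Sum>i\<in>A. (a i)^2) * (\<Sum>i\<in>A. (b i)^2)"
    by (subst sum.swap) (simp add: sum_product)
  also have "(\<Sum>i\<in>A. \<Sum>j\<in>A. (a i * b i) * (a j * b j)) = (\<Sum>i\<in>A. a i * b i)^2"
    by (simp add: sum_product power2_eq_square)
  finally show ?thesis by simp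
qed

lemma my_CS_card:
  fixes f :: "'i \<Rightarrow> real"
  shows "(\<Sum>i\<in>A. f i)^2 \<le> real (card A) * (\<Sum>i\<in>A. (f i)^2)"
  using my_CS[of "\<lambda>_. 1" f A] by simp

lemma powr_part:
  fixes x :: real and n d :: nat
  assumes x: "1 \<le> x" and n: "1 \<le> n"
  shows "sqrt (x ^ (n*n) * x ^ (n*n - n)) ^ d \<le> x powr (real d * real n ^ 2 - (real d - 1) * real n / 2 - 1 / 2)"
proof -
  have x0: "0 < x" using x by simp
  have nn: "n \<le> n * n" using n by simp
  have "x ^ (n*n) * x ^ (n*n - n) = x powr (real (n*n + (n*n - n)))"
    using x0 by (simp only: power_add[symmetric] powr_realpow)
  then have "sqrt (x ^ (n*n) * x ^ (n*n - n)) = x powr (real (n*n + (n*n - n)) / 2)"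
    using x0 by (simp add: powr_half_sqrt[symmetric] powr_powr)
  then have "sqrt (x ^ (n*n) * x ^ (n*n - n)) ^ d = x powr (real (n*n + (n*n - n)) / 2 * real d)"
    using x0 by (simp add: powr_realpow[symmetric] powr_powr)
  also have "real (n*n + (n*n - n)) / 2 * real d = real d * real n ^ 2 - real d * real n / 2"
  proof -
    have e1: "real (n*n - n) = real n * real n - real n" using nn by (simp add: of_nat_diff)
    have h: "real (n*n + (n*n - n)) = real (n*n) + (real n * real n - real n)"
      by (simp only: of_nat_add e1)
    show ?thesis unfolding h by (simp add: power2_eq_square field_simps)
  qed
  also have "x powr (real d * real n ^ 2 - real d * real n / 2)
      \<le> x powr (real d * real n ^ 2 - (real d - 1) * real n / 2 - 1 / 2)"
  proof (rule powr_mono[OF _ x])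
    have "1 \<le> real n" using n by simp
    moreover have "(real d - 1) * real n = real d * real n - real n" by (simp add: algebra_simps)
    ultimately show "real d * real n ^ 2 - real d * real n / 2 \<le> real d * real n ^ 2 - (real d - 1) * real n / 2 - 1 / 2"
      by linarith
  qed
  finally show ?thesis .
qed

lemma sqrt_prod: "sqrt (prod f A) = (\<Prod>x\<in>A. sqrt (f x))"
  by (induction A rule: infinite_finite_induct) (auto simp: real_sqrt_mult)

fun nsm :: "('a,'b) ring_scheme \<Rightarrow> nat \<Rightarrow> 'a \<Rightarrow> 'a" where
  "nsm R 0 x = \<zero>\<^bsub>R\<^esub>"
| "nsm R (Suc k) x = x \<oplus>\<^bsub>R\<^esub> nsm R k x"

context ring begin

lemma nsm_closed[simp]: "x \<in> carrier R \<Longrightarrow> nsm R k x \<in> carrier R"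
  by (induction k) auto

lemma nsm_add: "x \<in> carrier R \<Longrightarrow> nsm R (a + b) x = nsm R a x \<oplus> nsm R b x"
  by (induction a) (auto simp: a_ac)

lemma a_lcancel': "a \<in> carrier R \<Longrightarrow> b \<in> carrier R \<Longrightarrow> c \<in> carrier R \<Longrightarrow> a \<oplus> b = a \<oplus> c \<Longrightarrow> b = c"
  by (metis a_comm add.right_cancel)

lemma nsm_one[simp]: "x \<in> carrier R \<Longrightarrow> nsm R 1 x = x"
  by simp

end

lemma (in field) add_char_exists:
  assumes fin: "finite (carrier R)"
  shows "\<exists>\<psi>::'a \<Rightarrow> complex. (\<forall>x\<in>carrier R. \<forall>y\<in>carrier R. \<psi> (x \<oplus> y) = \<psi> x * \<psi> y)
     \<and> (\<forall>x\<in>carrier R. cmod (\<psi> x) = 1) \<and> (\<exists>g\<in>carrier R. \<psi> g \<noteq> 1)"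
proof -
  define asg where "asg H \<longleftrightarrow> H \<subseteq> carrier R \<and> \<zero> \<in> H \<and> (\<forall>x\<in>H. \<forall>y\<in>H. x \<oplus> y \<in> H) \<and> (\<forall>x\<in>H. \<ominus> x \<in> H)" for H
  define Cands where "Cands = {H. asg H \<and> H \<noteq> carrier R}"
  have "\<one> \<in> carrier R" "\<one> \<noteq> \<zero>" by simp_all
  then have "{\<zero>} \<noteq> carrier R" by blast
  then have "{\<zero>} \<in> Cands" unfolding Cands_def asg_def by simp
  then have ne: "Cands \<noteq> {}" by blast
  have finC: "finite Cands" unfolding Cands_def asg_def
    by (rule finite_subset[of _ "Pow (carrier R)"]) (use fin in auto)
  define c where "c = Max (card ` Cands)"
  have "c \<in> card ` Cands" unfolding c_def using finC ne by (intro Max_in) auto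
  then obtain H where HC: "H \<in> Cands" and Hc: "card H = c" by blast
  have Hmax: "card H' \<le> card H" if "H' \<in> Cands" for H'
    unfolding Hc c_def using finC that by (intro Max_ge) auto
  have asgH: "asg H" and HneR: "H \<noteq> carrier R" using HC by (auto simp: Cands_def)
  have Hsub: "H \<subseteq> carrier R" and H0: "\<zero> \<in> H" and Hadd: "\<And>x y. x \<in> H \<Longrightarrow> y \<in> H \<Longrightarrow> x \<oplus> y \<in> H"
    and Hneg: "\<And>x. x \<in> H \<Longrightarrow> \<ominus> x \<in> H" using asgH by (auto simp: asg_def)
  obtain g where g: "g \<in> carrier R" "g \<notin> H" using Hsub HneR by blast
  have "\<exists>j>0. nsm R j g \<in> H"
  proof -
    let ?f = "\<lambda>k. nsm R k g"
    have "card (?f ` {..card (carrier R)}) \<le> card (carrier R)"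
      by (rule card_mono[OF fin]) (use g in auto)
    then have "\<not> inj_on ?f {..card (carrier R)}"
      by (intro pigeonhole) simp
    then obtain a b where ab: "a \<le> card (carrier R)" "b \<le> card (carrier R)" "a \<noteq> b" "?f a = ?f b"
      unfolding inj_on_def by blast
    have "\<exists>a b. a < b \<and> ?f a = ?f b" using ab by (metis linorder_neqE_nat)
    then obtain a b where ab2: "a < b" "?f a = ?f b" by blast
    have "?f b = ?f a \<oplus> ?f (b - a)" using nsm_add[OF g(1), of a "b - a"] ab2(1) by simp
    then have "?f a \<oplus> \<zero> = ?f a \<oplus> ?f (b - a)" using ab2(2) g(1) by simp
    then have "?f (b - a) = \<zero>" using a_lcancel' g(1) by (metis nsm_closed zero_closed)
    then show ?thesis using ab2(1) H0 by (intro exI[of _ "b - a"]) auto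
  qed
  define m where "m = (LEAST j. 0 < j \<and> nsm R j g \<in> H)"
  have m: "0 < m" "nsm R m g \<in> H"
    using LeastI_ex[OF \<open>\<exists>j>0. nsm R j g \<in> H\<close>] unfolding m_def by auto
  have mmin: "\<And>k. 0 < k \<Longrightarrow> k < m \<Longrightarrow> nsm R k g \<notin> H"
    using not_less_Least unfolding m_def by blast
  have m2: "m \<ge> 2" using m g by (metis One_nat_def Suc_leI Suc_lessI nsm_one numeral_2_eq_2)
  have mult_in: "nsm R (j * m) g \<in> H" for j
  proof (induction j)
    case 0 then show ?case using H0 by simp
  next
    case (Suc j) then show ?case using Hadd m(2) nsm_add[OF g(1), of m "j * m"] by (simp add: add.commute)
  qed
  define K where "K = {x. \<exists>k h. h \<in> H \<and> x = nsm R k g \<oplus> h}"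
  have Ksub: "K \<subseteq> carrier R" unfolding K_def using Hsub g by auto
  have "asg K"
    unfolding asg_def
  proof (intro conjI ballI)
    show "K \<subseteq> carrier R" by (fact Ksub)
    show "\<zero> \<in> K" unfolding K_def using H0 by (auto intro!: exI[of _ 0])
  next
    fix x y assume "x \<in> K" "y \<in> K"
    then obtain k1 h1 k2 h2 where "h1 \<in> H" "h2 \<in> H" "x = nsm R k1 g \<oplus> h1" "y = nsm R k2 g \<oplus> h2"
      unfolding K_def by blast
    moreover have "nsm R k1 g \<oplus> h1 \<oplus> (nsm R k2 g \<oplus> h2) = nsm R (k1 + k2) g \<oplus> (h1 \<oplus> h2)"
    proof -
      have "h1 \<in> carrier R" "h2 \<in> carrier R" using calculation Hsub by auto
      then show ?thesis using g nsm_add[OF g(1), of k1 k2] nsm_closed[OF g(1)] by (simp, algebra)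
    qed
    ultimately show "x \<oplus> y \<in> K" unfolding K_def using Hadd by blast
  next
    fix x assume "x \<in> K"
    then obtain k h where kh: "h \<in> H" "x = nsm R k g \<oplus> h" unfolding K_def by blast
    have hc: "h \<in> carrier R" using kh Hsub by auto
    have e: "nsm R (k * m) g = nsm R k g \<oplus> nsm R ((m - 1) * k) g"
      using nsm_add[OF g(1), of k "(m - 1) * k"] m(1)
      by (metis add.commute diff_Suc_1 gr0_conv_Suc mult.commute mult_Suc)
    have "\<ominus> x = nsm R ((m - 1) * k) g \<oplus> (\<ominus> nsm R (k * m) g \<oplus> \<ominus> h)"
      unfolding e kh(2) using hc nsm_closed[OF g(1)] by algebra
    then show "\<ominus> x \<in> K" unfolding K_def using Hadd Hneg mult_in kh(1) by blast
  qed
  have "H \<subset> K"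
  proof
    show "H \<subseteq> K" unfolding K_def using Hsub by (force intro!: exI[of _ 0])
    have "g \<in> K" unfolding K_def using H0 g by (force intro!: exI[of _ 1])
    then show "H \<noteq> K" using g by blast
  qed
  then have "card H < card K" using Ksub fin by (meson finite_subset psubset_card_mono)
  then have KR: "K = carrier R" using Hmax \<open>asg K\<close> unfolding Cands_def by fastforce
  define rep where "rep x k \<longleftrightarrow> k < m \<and> (\<exists>h\<in>H. x = nsm R k g \<oplus> h)" for x k
  have rep_ex: "\<exists>k. rep x k" if xc: "x \<in> carrier R" for x
  proof -
    obtain k h where kh: "h \<in> H" "x = nsm R k g \<oplus> h" using xc KR unfolding K_def by blast
    have hc: "h \<in> carrier R" using kh Hsub by auto
    have "nsm R k g = nsm R (k mod m) g \<oplus> nsm R (k div m * m) g"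
      using nsm_add[OF g(1), of "k mod m" "k div m * m"] by simp
    then have "x = nsm R (k mod m) g \<oplus> (nsm R (k div m * m) g \<oplus> h)"
      using kh(2) hc g nsm_closed a_assoc by (metis nsm_closed)
    then show ?thesis unfolding rep_def using m(1) Hadd[OF mult_in kh(1)] by (intro exI[of _ "k mod m"]) auto
  qed
  have rep_un_aux: "k1 = k2" if r: "rep x k1" "rep x k2" "k1 \<le> k2" for x k1 k2
  proof (rule ccontr)
    assume ne: "k1 \<noteq> k2"
    obtain h1 h2 where h: "h1 \<in> H" "h2 \<in> H" "x = nsm R k1 g \<oplus> h1" "x = nsm R k2 g \<oplus> h2" "k2 < m"
      using r unfolding rep_def by blast
    have hc: "h1 \<in> carrier R" "h2 \<in> carrier R" using h Hsub by auto
    have e: "nsm R k2 g = nsm R k1 g \<oplus> nsm R (k2 - k1) g"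
      using nsm_add[OF g(1), of k1 "k2 - k1"] r(3) by simp
    have "nsm R k1 g \<oplus> h1 = nsm R k1 g \<oplus> (nsm R (k2 - k1) g \<oplus> h2)"
      using h(3,4) e hc g a_assoc by (metis nsm_closed)
    then have "h1 = nsm R (k2 - k1) g \<oplus> h2" using a_lcancel' hc g by (metis add.m_closed nsm_closed)
    then have "nsm R (k2 - k1) g = h1 \<oplus> \<ominus> h2" using hc g by (simp add: a_assoc r_neg)
    then have "nsm R (k2 - k1) g \<in> H" using Hadd Hneg h by simp
    then show False using mmin[of "k2 - k1"] ne r(3) h(5) by auto
  qed
  have rep_un: "k1 = k2" if "rep x k1" "rep x k2" for x k1 k2
    using rep_un_aux that by (metis nat_le_linear)
  define idx where "idx x = (THE k. rep x k)" for x
  have idx: "rep x (idx x)" if "x \<in> carrier R" for x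
    unfolding idx_def using rep_ex[OF that] rep_un by (metis theI)
  define \<zeta> where "\<zeta> = cis (2 * pi / real m)"
  have zm: "\<zeta> ^ m = 1" unfolding \<zeta>_def DeMoivre using m(1) by simp
  have zpow_mod: "\<zeta> ^ k = \<zeta> ^ (k mod m)" for k
  proof -
    have "\<zeta> ^ k = \<zeta> ^ (k mod m + m * (k div m))" by simp
    also have "\<dots> = \<zeta> ^ (k mod m)" by (simp only: power_add power_mult zm) simp
    finally show ?thesis .
  qed
  define \<psi> where "\<psi> x = \<zeta> ^ idx x" for x
  have hom: "\<psi> (x \<oplus> y) = \<psi> x * \<psi> y" if xy: "x \<in> carrier R" "y \<in> carrier R" for x y
  proof -
    obtain h1 where h1: "h1 \<in> H" "x = nsm R (idx x) g \<oplus> h1" "idx x < m" using idx[OF xy(1)] unfolding rep_def by blast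
    obtain h2 where h2: "h2 \<in> H" "y = nsm R (idx y) g \<oplus> h2" "idx y < m" using idx[OF xy(2)] unfolding rep_def by blast
    let ?s = "idx x + idx y"
    have s1: "nsm R ?s g = nsm R (?s mod m) g \<oplus> nsm R (?s div m * m) g"
      using nsm_add[OF g(1), of "?s mod m" "?s div m * m"] by simp
    have hc: "h1 \<in> carrier R" "h2 \<in> carrier R" using h1 h2 Hsub by auto
    have e1: "x \<oplus> y = (nsm R (idx x) g \<oplus> h1) \<oplus> (nsm R (idx y) g \<oplus> h2)"
      using h1(2) h2(2) by (rule arg_cong2)
    also have "\<dots> = (nsm R (idx x) g \<oplus> nsm R (idx y) g) \<oplus> (h1 \<oplus> h2)"
      using hc nsm_closed[OF g(1)] by algebra
    also have "\<dots> = nsm R ?s g \<oplus> (h1 \<oplus> h2)"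
      using nsm_add[OF g(1), of "idx x" "idx y"] by simp
    also have "\<dots> = nsm R (?s mod m) g \<oplus> (nsm R (?s div m * m) g \<oplus> (h1 \<oplus> h2))"
      unfolding s1 using hc nsm_closed[OF g(1)] by algebra
    finally have "x \<oplus> y = nsm R (?s mod m) g \<oplus> (nsm R (?s div m * m) g \<oplus> (h1 \<oplus> h2))" .
    then have "rep (x \<oplus> y) (?s mod m)" unfolding rep_def using m(1) Hadd mult_in h1 h2 by auto
    then have "idx (x \<oplus> y) = ?s mod m" using rep_un idx xy by blast
    then show ?thesis unfolding \<psi>_def by (metis power_add zpow_mod)
  qed
  have nrm: "cmod (\<psi> x) = 1" for x unfolding \<psi>_def \<zeta>_def by (simp add: norm_power)
  have "rep g 1" unfolding rep_def using m2 H0 g by (auto intro!: bexI[of _ \<zero>])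
  then have "idx g = 1" using rep_un idx g by blast
  moreover have "\<zeta> \<noteq> 1"
  proof
    assume "\<zeta> = 1"
    then have "cos (2 * pi / real m) = 1" unfolding \<zeta>_def by (metis cis.simps(1) one_complex.simps(1))
    then obtain z :: int where z: "2 * pi / real m = real_of_int z * 2 * pi" using cos_one_2pi_int by blast
    then have "2 * pi * (1 / real m) = 2 * pi * real_of_int z" by (simp add: algebra_simps)
    then have "1 / real m = real_of_int z" using pi_neq_zero by (simp only: mult_cancel_left) simp
    moreover have "0 < 1 / real m" "1 / real m < 1" using m2 by auto
    ultimately have "(0::real) < real_of_int z" "real_of_int z < (1::real)" by simp_all
    then have "0 < z" "z < 1" by simp_all
    then show False by simp
  qed
  ultimately have "\<psi> g \<noteq> 1" unfolding \<psi>_def by simp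
  then show ?thesis using hom nrm g(1) by blast
qed


locale fchar = field R for R :: "('a, 'b) ring_scheme" (structure) +
  fixes psi :: "'a \<Rightarrow> complex" and n :: nat and g0 :: 'a
  assumes fin: "finite (carrier R)"
  and hom: "x \<in> carrier R \<Longrightarrow> y \<in> carrier R \<Longrightarrow> psi (x \<oplus> y) = psi x * psi y"
  and nrm: "x \<in> carrier R \<Longrightarrow> cmod (psi x) = 1"
  and g0: "g0 \<in> carrier R" "psi g0 \<noteq> 1"
begin

abbreviation "II \<equiv> {0..<n}"
abbreviation "MM \<equiv> mat_set R n"
abbreviation "q \<equiv> card (carrier R)"

lemma psi0: "psi \<zero> = 1"
proof -
  have "psi \<zero> = psi \<zero> * psi \<zero>" using hom[of \<zero> \<zero>] by simp
  moreover have "psi \<zero> \<noteq> 0" using nrm[of \<zero>] by auto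
  ultimately show ?thesis by (metis mult_cancel_left2)
qed

lemma unit_inv: "cmod z = 1 \<Longrightarrow> z * cnj z = 1"
  using complex_norm_square[of z] by simp

lemma psi_neg: "x \<in> carrier R \<Longrightarrow> psi (\<ominus> x) = cnj (psi x)"
proof -
  assume x: "x \<in> carrier R"
  have "psi x * psi (\<ominus> x) = 1" using hom[of x "\<ominus> x"] x psi0 by (simp add: r_neg)
  moreover have "psi x * cnj (psi x) = 1" using unit_inv nrm x by blast
  ultimately show ?thesis by (metis mult.left_commute mult.right_neutral mult.commute)
qed

lemma psi_sum: "finite S \<Longrightarrow> f \<in> S \<rightarrow> carrier R \<Longrightarrow> psi (finsum R f S) = (\<Prod>s\<in>S. psi (f s))"
proof (induction S rule: finite_induct)
  case empty then show ?case using psi0 by simp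
next
  case (insert a S)
  then have fa: "f a \<in> carrier R" and fS: "f \<in> S \<rightarrow> carrier R" by auto
  have "psi (finsum R f (insert a S)) = psi (f a \<oplus> finsum R f S)"
    using insert fa fS by (simp add: finsum_insert)
  also have "\<dots> = psi (f a) * psi (finsum R f S)" using hom fa fS finsum_closed by blast
  finally show ?case using insert fS by simp
qed

lemma orth1: assumes y: "y \<in> carrier R"
  shows "(\<Sum>x\<in>carrier R. psi (x \<otimes> y)) = (if y = \<zero> then of_nat q else 0)"
proof (cases "y = \<zero>")
  case True then show ?thesis using psi0 by simp
next
  case False
  define t where "t = g0 \<otimes> inv y"
  have yU: "y \<in> Units R" using False y field_Units by blast
  have t: "t \<in> carrier R" unfolding t_def using g0 yU by auto
  have ty: "t \<otimes> y = g0" unfolding t_def using g0 yU y by (simp add: m_assoc)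
  let ?S = "\<Sum>x\<in>carrier R. psi (x \<otimes> y)"
  have l1: "a \<ominus> t \<oplus> t = a" "a \<oplus> t \<ominus> t = a" if "a \<in> carrier R" for a
    using that t by algebra+
  have "?S = (\<Sum>x\<in>carrier R. psi ((x \<oplus> t) \<otimes> y))"
    by (rule sum.reindex_bij_witness[of _ "\<lambda>x. x \<oplus> t" "\<lambda>x. x \<ominus> t"]) (use t l1 in auto)
  also have "\<dots> = (\<Sum>x\<in>carrier R. psi (x \<otimes> y) * psi g0)"
  proof (rule sum.cong[OF refl])
    fix x assume x: "x \<in> carrier R"
    have "(x \<oplus> t) \<otimes> y = x \<otimes> y \<oplus> t \<otimes> y" using x t y by algebra
    then show "psi ((x \<oplus> t) \<otimes> y) = psi (x \<otimes> y) * psi g0" using hom[of "x \<otimes> y" g0] x y g0 ty by simp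
  qed
  also have "\<dots> = ?S * psi g0" by (simp add: sum_distrib_right)
  finally have "?S * (1 - psi g0) = 0" by (simp add: algebra_simps)
  then have "?S = 0" using g0(2) by simp
  then show ?thesis using False by simp
qed

lemma finM: "finite MM"
  unfolding mat_set_def using fin by (intro finite_PiE) auto

lemma cardM: "card MM = q ^ (n * n)"
  unfolding mat_set_def by (simp add: card_PiE power_mult)

lemma sum_M_prod:
  fixes f :: "nat \<Rightarrow> nat \<Rightarrow> 'a \<Rightarrow> complex"
  shows   "(\<Sum>Xm\<in>MM. \<Prod>i\<in>II. \<Prod>j\<in>II. f i j (Xm i j)) = (\<Prod>i\<in>II. \<Prod>j\<in>II. \<Sum>x\<in>carrier R. f i j x)"
proof -
  have "(\<Prod>i\<in>II. \<Prod>j\<in>II. \<Sum>x\<in>carrier R. f i j x) = (\<Prod>i\<in>II. \<Sum>r\<in>II \<rightarrow>\<^sub>E carrier R. \<Prod>j\<in>II. f i j (r j))"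
  proof (rule prod.cong[OF refl])
    fix i show "(\<Prod>j\<in>II. \<Sum>x\<in>carrier R. f i j x) = (\<Sum>r\<in>II \<rightarrow>\<^sub>E carrier R. \<Prod>j\<in>II. f i j (r j))"
      using prod_sum_PiE[of II "\<lambda>_. carrier R" "f i"] fin by simp
  qed
  also have "\<dots> = (\<Sum>Xm\<in>II \<rightarrow>\<^sub>E (II \<rightarrow>\<^sub>E carrier R). \<Prod>i\<in>II. \<Prod>j\<in>II. f i j (Xm i j))"
    using fin by (intro prod_sum_PiE) (auto intro: finite_PiE)
  finally show ?thesis unfolding mat_set_def by simp
qed

definition ch :: "'a mat \<Rightarrow> 'a mat \<Rightarrow> complex" where
  "ch Xm Y = (\<Prod>i\<in>II. \<Prod>j\<in>II. psi (Xm i j \<otimes> Y i j))"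

lemma M_elem: "Xm \<in> MM \<Longrightarrow> i \<in> II \<Longrightarrow> j \<in> II \<Longrightarrow> Xm i j \<in> carrier R"
  unfolding mat_set_def by (meson PiE_mem)

lemma orthM: assumes "Y1 \<in> MM" "Y2 \<in> MM"
  shows "(\<Sum>Xm\<in>MM. ch Xm Y1 * cnj (ch Xm Y2)) = (if Y1 = Y2 then of_nat (card MM) else 0)"
proof -
  have "(\<Sum>Xm\<in>MM. ch Xm Y1 * cnj (ch Xm Y2)) = (\<Sum>Xm\<in>MM. \<Prod>i\<in>II. \<Prod>j\<in>II. psi (Xm i j \<otimes> (Y1 i j \<ominus> Y2 i j)))"
  proof (rule sum.cong[OF refl])
    fix Xm assume Xm: "Xm \<in> MM"
    have "ch Xm Y1 * cnj (ch Xm Y2) = (\<Prod>i\<in>II. \<Prod>j\<in>II. psi (Xm i j \<otimes> Y1 i j) * cnj (psi (Xm i j \<otimes> Y2 i j)))"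
      unfolding ch_def by (simp add: cnj_prod prod.distrib)
    also have "\<dots> = (\<Prod>i\<in>II. \<Prod>j\<in>II. psi (Xm i j \<otimes> (Y1 i j \<ominus> Y2 i j)))"
    proof (intro prod.cong refl)
      fix i j assume ij: "i \<in> II" "j \<in> II"
      have c: "Xm i j \<in> carrier R" "Y1 i j \<in> carrier R" "Y2 i j \<in> carrier R" using M_elem ij Xm assms by auto
      have "Xm i j \<otimes> (Y1 i j \<ominus> Y2 i j) = Xm i j \<otimes> Y1 i j \<oplus> \<ominus> (Xm i j \<otimes> Y2 i j)" using c by algebra
      then show "psi (Xm i j \<otimes> Y1 i j) * cnj (psi (Xm i j \<otimes> Y2 i j)) = psi (Xm i j \<otimes> (Y1 i j \<ominus> Y2 i j))"
        using c hom psi_neg by simp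
    qed
    finally show "ch Xm Y1 * cnj (ch Xm Y2) = (\<Prod>i\<in>II. \<Prod>j\<in>II. psi (Xm i j \<otimes> (Y1 i j \<ominus> Y2 i j)))" .
  qed
  also have "\<dots> = (\<Prod>i\<in>II. \<Prod>j\<in>II. \<Sum>x\<in>carrier R. psi (x \<otimes> (Y1 i j \<ominus> Y2 i j)))"
    by (rule sum_M_prod)
  also have "\<dots> = (\<Prod>i\<in>II. \<Prod>j\<in>II. if Y1 i j = Y2 i j then of_nat q else 0)"
  proof (intro prod.cong refl)
    fix i j assume ij: "i \<in> II" "j \<in> II"
    have c: "Y1 i j \<in> carrier R" "Y2 i j \<in> carrier R" using M_elem ij assms by auto
    have "(Y1 i j \<ominus> Y2 i j = \<zero>) = (Y1 i j = Y2 i j)" using c by (simp add: r_right_minus_eq)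
    then show "(\<Sum>x\<in>carrier R. psi (x \<otimes> (Y1 i j \<ominus> Y2 i j))) = (if Y1 i j = Y2 i j then of_nat q else 0)"
      using orth1[of "Y1 i j \<ominus> Y2 i j"] c by simp
  qed
  also have "\<dots> = (if Y1 = Y2 then of_nat (card MM) else 0)"
  proof (cases "Y1 = Y2")
    case True
    have "(\<Prod>i\<in>II. \<Prod>j\<in>II. if Y1 i j = Y2 i j then of_nat q else 0) = (\<Prod>i\<in>II. \<Prod>j\<in>II. (of_nat q :: complex))"
      using True by simp
    also have "\<dots> = of_nat (card MM)" by (simp add: cardM power_mult)
    finally show ?thesis using True by simp
  next
    case False
    have "\<not> (\<forall>i\<in>II. \<forall>j\<in>II. Y1 i j = Y2 i j)"
    proof
      assume h: "\<forall>i\<in>II. \<forall>j\<in>II. Y1 i j = Y2 i j"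
      have "Y1 i = Y2 i" if i: "i \<in> II" for i
      proof (rule PiE_ext)
        show "Y1 i \<in> II \<rightarrow>\<^sub>E carrier R" "Y2 i \<in> II \<rightarrow>\<^sub>E carrier R"
          using assms i unfolding mat_set_def by (meson PiE_mem)+
        show "\<And>j. j \<in> II \<Longrightarrow> Y1 i j = Y2 i j" using h i by blast
      qed
      then have "Y1 = Y2" using assms unfolding mat_set_def by (intro PiE_ext) auto
      then show False using False by contradiction
    qed
    then obtain i j where ij: "i \<in> II" "j \<in> II" "Y1 i j \<noteq> Y2 i j" by blast
    have z1: "(\<Prod>j\<in>II. if Y1 i j = Y2 i j then of_nat q else 0) = (0::complex)"
      using ij by (intro prod_zero) auto
    have "(\<Prod>i\<in>II. \<Prod>j\<in>II. if Y1 i j = Y2 i j then of_nat q else 0) = (0::complex)"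
      apply (rule prod_zero)
       apply simp
      using ij(1) z1 by blast
    then show ?thesis using False by simp
  qed
  finally show ?thesis .
qed


lemma M_I: "(\<And>i j. i \<in> II \<Longrightarrow> j \<in> II \<Longrightarrow> Y i j \<in> carrier R) \<Longrightarrow>
  (\<lambda>i\<in>II. \<lambda>j\<in>II. Y i j) \<in> MM"
  unfolding mat_set_def by auto

lemma mat_add_M: "mat_add R n E F \<in> MM" if "E \<in> MM" "F \<in> MM"
  unfolding mat_add_def using that M_elem by (intro M_I) auto

lemma mat_zero_M: "mat_zero R n \<in> MM"
  unfolding mat_zero_def by (intro M_I) auto

lemma mat_mult_M: "mat_mult R n A B \<in> MM" if "A \<in> MM" "B \<in> MM"
  unfolding mat_mult_def using that M_elem by (intro M_I finsum_closed) auto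

lemma mat_sum_M: "(\<And>l. l < d \<Longrightarrow> Mf l \<in> MM) \<Longrightarrow> mat_sum R n Mf d \<in> MM"
  by (induction d) (auto simp: mat_zero_M mat_add_M)

lemma ch_add: assumes "Xm \<in> MM" "E \<in> MM" "F \<in> MM"
  shows "ch Xm (mat_add R n E F) = ch Xm E * ch Xm F"
proof -
  have "ch Xm (mat_add R n E F) = (\<Prod>i\<in>II. \<Prod>j\<in>II. psi (Xm i j \<otimes> E i j) * psi (Xm i j \<otimes> F i j))"
    unfolding ch_def
  proof (intro prod.cong refl)
    fix i j assume ij: "i \<in> II" "j \<in> II"
    have c: "Xm i j \<in> carrier R" "E i j \<in> carrier R" "F i j \<in> carrier R" using M_elem ij assms by auto
    have "Xm i j \<otimes> mat_add R n E F i j = Xm i j \<otimes> E i j \<oplus> Xm i j \<otimes> F i j"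
      unfolding mat_add_def using ij c by (simp add: r_distr)
    then show "psi (Xm i j \<otimes> mat_add R n E F i j) = psi (Xm i j \<otimes> E i j) * psi (Xm i j \<otimes> F i j)"
      using hom c by simp
  qed
  then show ?thesis unfolding ch_def by (simp add: prod.distrib)
qed

lemma ch_zero: "ch Xm (mat_zero R n) = 1" if "Xm \<in> MM"
  unfolding ch_def mat_zero_def using that M_elem psi0 by (intro prod.neutral ballI) auto

lemma ch_Xzero: "ch (mat_zero R n) Y = 1" if "Y \<in> MM"
  unfolding ch_def mat_zero_def using that M_elem psi0 by (intro prod.neutral ballI) auto

lemma ch_sum: "Xm \<in> MM \<Longrightarrow> (\<And>l. l < d \<Longrightarrow> Mf l \<in> MM) \<Longrightarrow>
    ch Xm (mat_sum R n Mf d) = (\<Prod>l<d. ch Xm (Mf l))"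
proof (induction d)
  case 0 then show ?case using ch_zero by simp
next
  case (Suc d)
  then have "ch Xm (mat_sum R n Mf (Suc d)) = ch Xm (mat_sum R n Mf d) * ch Xm (Mf d)"
    by (simp add: ch_add mat_sum_M)
  then show ?case using Suc by simp
qed

lemma norm_ch: "cmod (ch Xm Y) = 1" if "Xm \<in> MM" "Y \<in> MM"
  unfolding ch_def using that M_elem nrm by (simp add: prod_norm[symmetric])

definition Wm :: "'a mat \<Rightarrow> 'a mat \<Rightarrow> 'a mat" where
  "Wm Xm B = (\<lambda>i\<in>II. \<lambda>k\<in>II. finsum R (\<lambda>j. Xm i j \<otimes> B k j) II)"

lemma Wm_M: "Wm Xm B \<in> MM" if "Xm \<in> MM" "B \<in> MM"
  unfolding Wm_def using that M_elem by (intro M_I finsum_closed) auto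

lemma ch_mult: assumes X: "Xm \<in> MM" and A: "A \<in> MM" and B: "B \<in> MM"
  shows "ch Xm (mat_mult R n A B) = ch A (Wm Xm B)"
proof -
  have "ch Xm (mat_mult R n A B) = (\<Prod>i\<in>II. \<Prod>j\<in>II. \<Prod>k\<in>II. psi (A i k \<otimes> (Xm i j \<otimes> B k j)))"
    unfolding ch_def
  proof (intro prod.cong refl)
    fix i j assume ij: "i \<in> II" "j \<in> II"
    have "Xm i j \<otimes> mat_mult R n A B i j = finsum R (\<lambda>k. Xm i j \<otimes> (A i k \<otimes> B k j)) II"
      unfolding mat_mult_def using ij M_elem X A B by (simp add: finsum_rdistr)
    also have "\<dots> = finsum R (\<lambda>k. A i k \<otimes> (Xm i j \<otimes> B k j)) II"
      using ij M_elem X A B by (intro finsum_cong') (auto simp: m_lcomm)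
    finally have e: "Xm i j \<otimes> mat_mult R n A B i j = finsum R (\<lambda>k. A i k \<otimes> (Xm i j \<otimes> B k j)) II" .
    have fc: "(\<lambda>k. A i k \<otimes> (Xm i j \<otimes> B k j)) \<in> II \<rightarrow> carrier R"
      using ij M_elem X A B by auto
    show "psi (Xm i j \<otimes> mat_mult R n A B i j) = (\<Prod>k\<in>II. psi (A i k \<otimes> (Xm i j \<otimes> B k j)))"
      unfolding e using psi_sum[OF _ fc] by simp
  qed
  also have "\<dots> = (\<Prod>i\<in>II. \<Prod>k\<in>II. \<Prod>j\<in>II. psi (A i k \<otimes> (Xm i j \<otimes> B k j)))"
    by (intro prod.cong refl prod.swap)
  also have "\<dots> = ch A (Wm Xm B)"
    unfolding ch_def
  proof (intro prod.cong refl)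
    fix i k assume ik: "i \<in> II" "k \<in> II"
    have "A i k \<otimes> Wm Xm B i k = finsum R (\<lambda>j. A i k \<otimes> (Xm i j \<otimes> B k j)) II"
      unfolding Wm_def using ik M_elem X A B by (simp add: finsum_rdistr)
    moreover have fc: "(\<lambda>j. A i k \<otimes> (Xm i j \<otimes> B k j)) \<in> II \<rightarrow> carrier R"
      using ik M_elem X A B by auto
    ultimately show "(\<Prod>j\<in>II. psi (A i k \<otimes> (Xm i j \<otimes> B k j))) = psi (A i k \<otimes> Wm Xm B i k)"
      using psi_sum[OF _ fc] by simp
  qed
  finally show ?thesis .
qed


lemma finsum_split: assumes "j0 \<in> A" "finite A" "f \<in> A \<rightarrow> carrier R"
  shows "finsum R f A = f j0 \<oplus> finsum R f (A - {j0})"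
proof -
  have "finsum R f A = finsum R f (insert j0 (A - {j0}))" by (simp only: insert_Diff[OF assms(1)])
  also have "\<dots> = f j0 \<oplus> finsum R f (A - {j0})" using assms by (intro finsum_insert) auto
  finally show ?thesis .
qed

lemma nonzero_entry: assumes "Xm \<in> MM" "Xm \<noteq> mat_zero R n"
  shows "\<exists>i0\<in>II. \<exists>j0\<in>II. Xm i0 j0 \<noteq> \<zero>"
proof (rule ccontr)
  assume "\<not> ?thesis"
  then have h: "\<forall>i\<in>II. \<forall>j\<in>II. Xm i j = mat_zero R n i j" unfolding mat_zero_def by auto
  have "Xm i = mat_zero R n i" if i: "i \<in> II" for i
  proof (rule PiE_ext)
    show "Xm i \<in> II \<rightarrow>\<^sub>E carrier R" "mat_zero R n i \<in> II \<rightarrow>\<^sub>E carrier R"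
      using assms(1) mat_zero_M i unfolding mat_set_def by (meson PiE_mem)+
    show "\<And>j. j \<in> II \<Longrightarrow> Xm i j = mat_zero R n i j" using h i by blast
  qed
  then have "Xm = mat_zero R n" using assms(1) mat_zero_M unfolding mat_set_def by (intro PiE_ext) auto
  then show False using assms(2) by contradiction
qed

lemma count_W: assumes X: "Xm \<in> MM" and ij0: "i0 \<in> II" "j0 \<in> II" "Xm i0 j0 \<noteq> \<zero>" and B: "B \<in> MM"
  shows "card {B' \<in> MM. Wm Xm B' = Wm Xm B} \<le> q ^ (n * n - n)"
proof -
  let ?S = "{B' \<in> MM. Wm Xm B' = Wm Xm B}"
  let ?J = "II - {j0}"
  define h where "h B' = (\<lambda>k\<in>II. restrict (B' k) ?J)" for B' :: "'a mat"
  let ?T = "II \<rightarrow>\<^sub>E (?J \<rightarrow>\<^sub>E carrier R)"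
  have x0: "Xm i0 j0 \<in> carrier R" using M_elem X ij0 by auto
  have inj: "inj_on h ?S"
  proof (rule inj_onI)
    fix B1 B2 assume B1: "B1 \<in> ?S" and B2: "B2 \<in> ?S" and hh: "h B1 = h B2"
    have B1M: "B1 \<in> MM" and B2M: "B2 \<in> MM" and WW: "Wm Xm B1 = Wm Xm B2" using B1 B2 by auto
    have off: "B1 k j = B2 k j" if "k \<in> II" "j \<in> ?J" for k j
    proof -
      have "h B1 k j = h B2 k j" using hh by simp
      then show ?thesis unfolding h_def using that by simp
    qed
    have on: "B1 k j0 = B2 k j0" if k: "k \<in> II" for k
    proof -
      have "Wm Xm B1 i0 k = Wm Xm B2 i0 k" using WW by simp
      then have e: "finsum R (\<lambda>j. Xm i0 j \<otimes> B1 k j) II = finsum R (\<lambda>j. Xm i0 j \<otimes> B2 k j) II"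
        unfolding Wm_def using ij0 k by simp
      have c1: "(\<lambda>j. Xm i0 j \<otimes> B1 k j) \<in> ?J \<rightarrow> carrier R" "(\<lambda>j. Xm i0 j \<otimes> B2 k j) \<in> ?J \<rightarrow> carrier R"
        using M_elem X B1M B2M ij0 k by auto
      have c2: "B1 k j0 \<in> carrier R" "B2 k j0 \<in> carrier R" using M_elem B1M B2M ij0 k by auto
      have rest: "finsum R (\<lambda>j. Xm i0 j \<otimes> B1 k j) ?J = finsum R (\<lambda>j. Xm i0 j \<otimes> B2 k j) ?J"
        using off k c1 by (intro finsum_cong') auto
      have s1: "finsum R (\<lambda>j. Xm i0 j \<otimes> B1 k j) II = Xm i0 j0 \<otimes> B1 k j0 \<oplus> finsum R (\<lambda>j. Xm i0 j \<otimes> B1 k j) ?J"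
        by (rule finsum_split) (use ij0 M_elem X B1M k in auto)
      have s2: "finsum R (\<lambda>j. Xm i0 j \<otimes> B2 k j) II = Xm i0 j0 \<otimes> B2 k j0 \<oplus> finsum R (\<lambda>j. Xm i0 j \<otimes> B2 k j) ?J"
        by (rule finsum_split) (use ij0 M_elem X B2M k in auto)
      have "Xm i0 j0 \<otimes> B1 k j0 \<oplus> finsum R (\<lambda>j. Xm i0 j \<otimes> B1 k j) ?J
          = Xm i0 j0 \<otimes> B2 k j0 \<oplus> finsum R (\<lambda>j. Xm i0 j \<otimes> B2 k j) ?J"
        using e by (simp only: s1 s2)
      then have "Xm i0 j0 \<otimes> B1 k j0 = Xm i0 j0 \<otimes> B2 k j0"
      proof -
        have fr: "finsum R (\<lambda>j. Xm i0 j \<otimes> B2 k j) ?J \<in> carrier R" using c1(2) by (rule finsum_closed)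
        show ?thesis using \<open>Xm i0 j0 \<otimes> B1 k j0 \<oplus> _ = _\<close> unfolding rest
          using add.right_cancel[OF fr m_closed[OF x0 c2(1)] m_closed[OF x0 c2(2)]] by simp
      qed
      then show ?thesis using m_lcancel[OF ij0(3) x0 c2] by simp
    qed
    have "B1 k = B2 k" if k: "k \<in> II" for k
    proof (rule PiE_ext)
      show "B1 k \<in> II \<rightarrow>\<^sub>E carrier R" "B2 k \<in> II \<rightarrow>\<^sub>E carrier R"
        using B1M B2M k unfolding mat_set_def by (meson PiE_mem)+
      fix j assume j: "j \<in> II"
      show "B1 k j = B2 k j" using off[OF k] on[OF k] j by (cases "j = j0") auto
    qed
    then show "B1 = B2" using B1M B2M unfolding mat_set_def by (intro PiE_ext) auto
  qed
  have img: "h ` ?S \<subseteq> ?T"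
  proof
    fix z assume "z \<in> h ` ?S"
    then obtain B' where B': "B' \<in> MM" "z = h B'" by auto
    show "z \<in> ?T" unfolding B'(2) h_def using M_elem[OF B'(1)] by (auto simp: restrict_PiE_iff)
  qed
  have finT: "finite ?T" using fin by (intro finite_PiE) auto
  have "card ?S = card (h ` ?S)" using inj by (simp add: card_image)
  also have "\<dots> \<le> card ?T" using img finT by (rule card_mono[rotated])
  also have "card ?T = (q ^ (n - 1)) ^ n" using ij0 by (simp add: card_PiE)
  also have "\<dots> = q ^ (n * n - n)"
    by (simp add: power_mult[symmetric] diff_mult_distrib)
  finally show ?thesis .
qed


lemma sum_if_const: "finite S \<Longrightarrow> (\<Sum>x\<in>S. if P x then (c::real) else 0) = c * real (card {x\<in>S. P x})"
  by (simp add: sum.inter_filter[symmetric])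

lemma pair_bound: assumes X: "Xm \<in> MM" "Xm \<noteq> mat_zero R n" and A: "AA \<subseteq> MM" and B: "BB \<subseteq> MM"
  shows "(cmod (\<Sum>a\<in>AA. \<Sum>b\<in>BB. ch Xm (mat_mult R n a b)))^2
     \<le> real (card AA) * real (card BB) * real (card MM) * real q ^ (n * n - n)"
proof -
  obtain i0 j0 where ij0: "i0 \<in> II" "j0 \<in> II" "Xm i0 j0 \<noteq> \<zero>" using nonzero_entry[OF X] by blast
  have finA: "finite AA" and finB: "finite BB" using A B finM finite_subset by auto
  define v where "v a = (\<Sum>b\<in>BB. ch a (Wm Xm b))" for a
  have u_eq: "(\<Sum>a\<in>AA. \<Sum>b\<in>BB. ch Xm (mat_mult R n a b)) = (\<Sum>a\<in>AA. v a)"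
    unfolding v_def by (intro sum.cong refl ch_mult) (use A B X(1) in auto)
  have s1: "cmod (\<Sum>a\<in>AA. v a) \<le> (\<Sum>a\<in>AA. cmod (v a))" by (rule norm_sum)
  have s2: "(\<Sum>a\<in>AA. cmod (v a))^2 \<le> real (card AA) * (\<Sum>a\<in>AA. (cmod (v a))^2)" by (rule my_CS_card)
  have s3: "(\<Sum>a\<in>AA. (cmod (v a))^2) \<le> (\<Sum>a\<in>MM. (cmod (v a))^2)"
    using A finM by (intro sum_mono2) auto
  have "complex_of_real (\<Sum>a\<in>MM. (cmod (v a))^2) = (\<Sum>a\<in>MM. v a * cnj (v a))"
    by (simp only: of_real_sum complex_norm_square)
  also have "\<dots> = (\<Sum>a\<in>MM. \<Sum>b\<in>BB. \<Sum>b'\<in>BB. ch a (Wm Xm b) * cnj (ch a (Wm Xm b')))"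
    unfolding v_def by (simp add: sum_product cnj_sum)
  also have "\<dots> = (\<Sum>b\<in>BB. \<Sum>b'\<in>BB. \<Sum>a\<in>MM. ch a (Wm Xm b) * cnj (ch a (Wm Xm b')))"
    by (subst sum.swap) (simp add: sum.swap[of _ MM])
  also have "\<dots> = (\<Sum>b\<in>BB. \<Sum>b'\<in>BB. if Wm Xm b = Wm Xm b' then of_nat (card MM) else 0)"
    by (intro sum.cong refl orthM Wm_M) (use B X(1) in auto)
  also have "\<dots> = complex_of_real (\<Sum>b\<in>BB. \<Sum>b'\<in>BB. if Wm Xm b = Wm Xm b' then real (card MM) else 0)"
    unfolding of_real_sum by (intro sum.cong refl) simp
  finally have s4: "(\<Sum>a\<in>MM. (cmod (v a))^2) = (\<Sum>b\<in>BB. \<Sum>b'\<in>BB. if Wm Xm b = Wm Xm b' then real (card MM) else 0)"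
    using of_real_eq_iff by blast
  have s5: "(\<Sum>b'\<in>BB. if Wm Xm b = Wm Xm b' then real (card MM) else 0) \<le> real (card MM) * real q ^ (n * n - n)"
    if b: "b \<in> BB" for b
  proof -
    have "card {b'\<in>BB. Wm Xm b = Wm Xm b'} \<le> card {b'\<in>MM. Wm Xm b' = Wm Xm b}"
      using B finM by (intro card_mono) auto
    also have "\<dots> \<le> q ^ (n * n - n)" by (rule count_W[OF X(1) ij0]) (use b B in blast)
    finally have c1: "card {b'\<in>BB. Wm Xm b = Wm Xm b'} \<le> q ^ (n * n - n)" .
    have c2: "real (card {b'\<in>BB. Wm Xm b = Wm Xm b'}) \<le> real q ^ (n * n - n)"
      using c1 by (simp only: of_nat_le_iff of_nat_power[symmetric])
    have "(\<Sum>b'\<in>BB. if Wm Xm b = Wm Xm b' then real (card MM) else 0)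
        = real (card MM) * real (card {b'\<in>BB. Wm Xm b = Wm Xm b'})"
      by (rule sum_if_const[OF finB])
    also have "\<dots> \<le> real (card MM) * real q ^ (n * n - n)"
      using c2 by (rule mult_left_mono) simp
    finally show ?thesis .
  qed
  have s6: "(\<Sum>b\<in>BB. \<Sum>b'\<in>BB. if Wm Xm b = Wm Xm b' then real (card MM) else 0)
      \<le> real (card BB) * (real (card MM) * real q ^ (n * n - n))"
    using sum_mono[OF s5, of BB] by simp
  have "(cmod (\<Sum>a\<in>AA. v a))^2 \<le> (\<Sum>a\<in>AA. cmod (v a))^2"
    using s1 by (simp add: power_mono)
  also have "\<dots> \<le> real (card AA) * (\<Sum>a\<in>MM. (cmod (v a))^2)"
    using s2 s3 by (meson mult_left_mono of_nat_0_le_iff order_trans)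
  also have "\<dots> \<le> real (card AA) * (real (card BB) * (real (card MM) * real q ^ (n * n - n)))"
    using s4 s6 by (simp add: mult_left_mono)
  finally show ?thesis unfolding u_eq by (simp add: mult.assoc)
qed


lemma card_filter_sum: "finite S \<Longrightarrow> complex_of_nat (card {x\<in>S. P x}) = (\<Sum>x\<in>S. if P x then 1 else 0)"
  by (simp add: sum.inter_filter[symmetric])

lemma main_identity:
  fixes d :: nat and As Bs :: "nat \<Rightarrow> 'a mat set" and EE FF :: "'a mat set"
  assumes AsM: "\<And>i. i < d \<Longrightarrow> As i \<subseteq> MM" and BsM: "\<And>i. i < d \<Longrightarrow> Bs i \<subseteq> MM"
    and EM: "EE \<subseteq> MM" and FM: "FF \<subseteq> MM"
  shows "complex_of_nat (card {(A, B, E, F).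
                   A \<in> (\<Pi>\<^sub>E i\<in>{..<d}. As i) \<and> B \<in> (\<Pi>\<^sub>E i\<in>{..<d}. Bs i) \<and>
                   E \<in> EE \<and> F \<in> FF \<and>
                   mat_sum R n (\<lambda>i. mat_mult R n (A i) (B i)) d = mat_add R n E F})
   = (1 / of_nat (card MM)) * (\<Sum>Xm\<in>MM. (\<Prod>l<d. \<Sum>a\<in>As l. \<Sum>b\<in>Bs l. ch Xm (mat_mult R n a b))
        * (\<Sum>E\<in>EE. cnj (ch Xm E)) * (\<Sum>F\<in>FF. cnj (ch Xm F)))"
proof -
  let ?PA = "\<Pi>\<^sub>E i\<in>{..<d}. As i" and ?PB = "\<Pi>\<^sub>E i\<in>{..<d}. Bs i"
  let ?S = "\<lambda>A B. mat_sum R n (\<lambda>i. mat_mult R n (A i) (B i)) d"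
  let ?Q = "complex_of_nat (card MM)"
  define Pr where "Pr Xm A B = (\<Prod>l<d. ch Xm (mat_mult R n (A l) (B l)))" for Xm A B
  have finAs: "finite (As i)" if "i < d" for i using AsM[OF that] finM finite_subset by auto
  have finBs: "finite (Bs i)" if "i < d" for i using BsM[OF that] finM finite_subset by auto
  have finE: "finite EE" and finF: "finite FF" using EM FM finM finite_subset by auto
  have finPA: "finite ?PA" using finAs by (intro finite_PiE) auto
  have finPB: "finite ?PB" using finBs by (intro finite_PiE) auto
  have Q0: "?Q \<noteq> 0" using finM mat_zero_M by (auto simp: card_eq_0_iff)
  have T_eq: "{(A, B, E, F). A \<in> ?PA \<and> B \<in> ?PB \<and> E \<in> EE \<and> F \<in> FF \<and> ?S A B = mat_add R n E F}
      = {p \<in> ?PA \<times> (?PB \<times> (EE \<times> FF)). (\<lambda>(A, B, E, F). ?S A B = mat_add R n E F) p}"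
    by auto
  have step1: "complex_of_nat (card {(A, B, E, F). A \<in> ?PA \<and> B \<in> ?PB \<and> E \<in> EE \<and> F \<in> FF \<and> ?S A B = mat_add R n E F})
      = (\<Sum>A\<in>?PA. \<Sum>B\<in>?PB. \<Sum>E\<in>EE. \<Sum>F\<in>FF. if ?S A B = mat_add R n E F then 1 else 0)"
    unfolding T_eq using finPA finPB finE finF
    by (simp add: card_filter_sum sum.cartesian_product case_prod_beta)
  have ind: "(if ?S A B = mat_add R n E F then 1 else 0)
      = (1 / ?Q) * (\<Sum>Xm\<in>MM. Pr Xm A B * cnj (ch Xm E) * cnj (ch Xm F))"
    if A: "A \<in> ?PA" and B: "B \<in> ?PB" and E: "E \<in> EE" and F: "F \<in> FF" for A B E F
  proof -
    have ABl: "mat_mult R n (A l) (B l) \<in> MM" if "l < d" for l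
    proof (rule mat_mult_M)
      show "A l \<in> MM" using PiE_mem[OF A, of l] AsM[OF that] that by auto
      show "B l \<in> MM" using PiE_mem[OF B, of l] BsM[OF that] that by auto
    qed
    have SM: "?S A B \<in> MM" using ABl by (rule mat_sum_M)
    have EM': "E \<in> MM" "F \<in> MM" using E F EM FM by auto
    have "(\<Sum>Xm\<in>MM. Pr Xm A B * cnj (ch Xm E) * cnj (ch Xm F))
        = (\<Sum>Xm\<in>MM. ch Xm (?S A B) * cnj (ch Xm (mat_add R n E F)))"
      unfolding Pr_def using ABl EM' by (intro sum.cong refl) (simp add: ch_sum ch_add mult.assoc)
    also have "\<dots> = (if ?S A B = mat_add R n E F then ?Q else 0)"
      using SM EM' by (intro orthM mat_add_M)
    finally show ?thesis using Q0 by simp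
  qed
  have step2: "(\<Sum>A\<in>?PA. \<Sum>B\<in>?PB. \<Sum>E\<in>EE. \<Sum>F\<in>FF. if ?S A B = mat_add R n E F then (1::complex) else 0)
      = (1 / ?Q) * (\<Sum>A\<in>?PA. \<Sum>B\<in>?PB. \<Sum>E\<in>EE. \<Sum>F\<in>FF. \<Sum>Xm\<in>MM. Pr Xm A B * cnj (ch Xm E) * cnj (ch Xm F))"
    by (simp add: ind sum_distrib_left)
  have step3: "(\<Sum>A\<in>?PA. \<Sum>B\<in>?PB. \<Sum>E\<in>EE. \<Sum>F\<in>FF. \<Sum>Xm\<in>MM. Pr Xm A B * cnj (ch Xm E) * cnj (ch Xm F))
      = (\<Sum>Xm\<in>MM. \<Sum>A\<in>?PA. \<Sum>B\<in>?PB. \<Sum>E\<in>EE. \<Sum>F\<in>FF. Pr Xm A B * cnj (ch Xm E) * cnj (ch Xm F))"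
    apply (subst sum.swap)
    apply (subst (2) sum.swap)
    apply (subst (3) sum.swap)
    apply (subst (4) sum.swap)
    by (rule refl)
  have step4: "(\<Sum>A\<in>?PA. \<Sum>B\<in>?PB. \<Sum>E\<in>EE. \<Sum>F\<in>FF. Pr Xm A B * cnj (ch Xm E) * cnj (ch Xm F))
      = (\<Sum>A\<in>?PA. \<Sum>B\<in>?PB. Pr Xm A B) * (\<Sum>E\<in>EE. cnj (ch Xm E)) * (\<Sum>F\<in>FF. cnj (ch Xm F))" for Xm
  proof -
    have inner: "(\<Sum>E\<in>EE. \<Sum>F\<in>FF. p * e E * f F) = p * (\<Sum>E\<in>EE. e E) * (\<Sum>F\<in>FF. f F)"
      for p :: complex and e f :: "'a mat \<Rightarrow> complex"
    proof -
      have "p * (\<Sum>E\<in>EE. e E) * (\<Sum>F\<in>FF. f F) = p * ((\<Sum>E\<in>EE. e E) * (\<Sum>F\<in>FF. f F))"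
        by (rule mult.assoc)
      also have "\<dots> = p * (\<Sum>E\<in>EE. \<Sum>F\<in>FF. e E * f F)" by (simp only: sum_product)
      also have "\<dots> = (\<Sum>E\<in>EE. \<Sum>F\<in>FF. p * (e E * f F))" by (simp only: sum_distrib_left)
      also have "\<dots> = (\<Sum>E\<in>EE. \<Sum>F\<in>FF. p * e E * f F)" by (simp only: mult.assoc)
      finally show ?thesis by (rule sym)
    qed
    have "(\<Sum>A\<in>?PA. \<Sum>B\<in>?PB. \<Sum>E\<in>EE. \<Sum>F\<in>FF. Pr Xm A B * cnj (ch Xm E) * cnj (ch Xm F))
      = (\<Sum>A\<in>?PA. \<Sum>B\<in>?PB. Pr Xm A B * (\<Sum>E\<in>EE. cnj (ch Xm E)) * (\<Sum>F\<in>FF. cnj (ch Xm F)))"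
      by (simp only: inner)
    also have "\<dots> = (\<Sum>A\<in>?PA. \<Sum>B\<in>?PB. Pr Xm A B) * (\<Sum>E\<in>EE. cnj (ch Xm E)) * (\<Sum>F\<in>FF. cnj (ch Xm F))"
      by (simp only: sum_distrib_right)
    finally show ?thesis .
  qed
  have step5: "(\<Sum>A\<in>?PA. \<Sum>B\<in>?PB. Pr Xm A B) = (\<Prod>l<d. \<Sum>a\<in>As l. \<Sum>b\<in>Bs l. ch Xm (mat_mult R n a b))" for Xm
  proof -
    have "(\<Prod>l<d. \<Sum>a\<in>As l. \<Sum>b\<in>Bs l. ch Xm (mat_mult R n a b))
        = (\<Sum>A\<in>?PA. \<Prod>l<d. \<Sum>b\<in>Bs l. ch Xm (mat_mult R n (A l) b))"
      using finAs by (intro prod_sum_PiE) auto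
    also have "\<dots> = (\<Sum>A\<in>?PA. \<Sum>B\<in>?PB. \<Prod>l<d. ch Xm (mat_mult R n (A l) (B l)))"
      using finBs by (intro sum.cong refl prod_sum_PiE) auto
    finally show ?thesis unfolding Pr_def by simp
  qed
  show ?thesis
    unfolding step1 step2 step3 step4 step5 ..
qed


lemma hat_sq: assumes SM: "SS \<subseteq> MM"
  shows "(\<Sum>Xm\<in>MM. (cmod (\<Sum>E\<in>SS. cnj (ch Xm E)))^2) = real (card MM) * real (card SS)"
proof -
  have finS: "finite SS" using SM finM finite_subset by auto
  have "complex_of_real (\<Sum>Xm\<in>MM. (cmod (\<Sum>E\<in>SS. cnj (ch Xm E)))^2)
      = (\<Sum>Xm\<in>MM. (\<Sum>E\<in>SS. cnj (ch Xm E)) * cnj (\<Sum>E\<in>SS. cnj (ch Xm E)))"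
    by (simp only: of_real_sum complex_norm_square)
  also have "\<dots> = (\<Sum>Xm\<in>MM. \<Sum>E\<in>SS. \<Sum>E'\<in>SS. cnj (ch Xm E) * ch Xm E')"
    by (simp add: sum_product cnj_sum)
  also have "\<dots> = (\<Sum>E\<in>SS. \<Sum>E'\<in>SS. \<Sum>Xm\<in>MM. cnj (ch Xm E) * ch Xm E')"
    by (subst sum.swap) (simp add: sum.swap[of _ MM])
  also have "\<dots> = (\<Sum>E\<in>SS. \<Sum>E'\<in>SS. if E' = E then of_nat (card MM) else 0)"
  proof (intro sum.cong refl)
    fix E E' assume "E \<in> SS" "E' \<in> SS"
    then have "(\<Sum>Xm\<in>MM. ch Xm E' * cnj (ch Xm E)) = (if E' = E then of_nat (card MM) else 0)"
      using SM by (intro orthM) auto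
    then show "(\<Sum>Xm\<in>MM. cnj (ch Xm E) * ch Xm E') = (if E' = E then of_nat (card MM) else 0)"
      by (simp add: mult.commute)
  qed
  also have "\<dots> = (\<Sum>E\<in>SS. of_nat (card MM))"
    using finS by (intro sum.cong refl) (simp add: sum.delta)
  also have "\<dots> = complex_of_real (real (card MM) * real (card SS))" by simp
  finally show ?thesis using of_real_eq_iff by blast
qed

lemma main_bound:
  fixes d :: nat and As Bs :: "nat \<Rightarrow> 'a mat set" and EE FF :: "'a mat set"
  assumes AsM: "\<And>i. i < d \<Longrightarrow> As i \<subseteq> MM" and BsM: "\<And>i. i < d \<Longrightarrow> Bs i \<subseteq> MM"
    and EM: "EE \<subseteq> MM" and FM: "FF \<subseteq> MM" and n1: "1 \<le> n"
  shows "\<bar>real (card {(A, B, E, F).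
                   A \<in> (\<Pi>\<^sub>E i\<in>{..<d}. As i) \<and> B \<in> (\<Pi>\<^sub>E i\<in>{..<d}. Bs i) \<and>
                   E \<in> EE \<and> F \<in> FF \<and>
                   mat_sum R n (\<lambda>i. mat_mult R n (A i) (B i)) d = mat_add R n E F})
         - (real (card EE) * real (card FF) * (\<Prod>i<d. real (card (As i)) * real (card (Bs i)))) / real q ^ (n\<^sup>2)\<bar>
      \<le> real q powr (real d * real n ^ 2 - (real d - 1) * real n / 2 - 1 / 2)
         * sqrt (real (card EE) * real (card FF) * (\<Prod>i<d. real (card (As i)) * real (card (Bs i))))"
proof -
  define N where "N = card {(A, B, E, F).
                   A \<in> (\<Pi>\<^sub>E i\<in>{..<d}. As i) \<and> B \<in> (\<Pi>\<^sub>E i\<in>{..<d}. Bs i) \<and>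
                   E \<in> EE \<and> F \<in> FF \<and>
                   mat_sum R n (\<lambda>i. mat_mult R n (A i) (B i)) d = mat_add R n E F}"
  define PI where "PI = (\<Prod>i<d. real (card (As i)) * real (card (Bs i)))"
  define P where "P = real (card EE) * real (card FF) * PI"
  define Q where "Q = real (card MM)"
  define Sx where "Sx Xm = (\<Prod>l<d. \<Sum>a\<in>As l. \<Sum>b\<in>Bs l. ch Xm (mat_mult R n a b))" for Xm
  define Eh where "Eh Xm = (\<Sum>E\<in>EE. cnj (ch Xm E))" for Xm
  define Fh where "Fh Xm = (\<Sum>F\<in>FF. cnj (ch Xm F))" for Xm
  define G where "G Xm = Sx Xm * Eh Xm * Fh Xm" for Xm
  define X0 where "X0 = mat_zero R n"
  define C where "C = Q * real q ^ (n * n - n)"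
  define K where "K = (\<Prod>l<d. sqrt (real (card (As l)) * real (card (Bs l)) * C))"
  have C0: "0 \<le> C" unfolding C_def Q_def by simp
  have X0M: "X0 \<in> MM" unfolding X0_def by (rule mat_zero_M)
  have q1: "1 \<le> real q"
  proof -
    have "{\<zero>, \<one>} \<subseteq> carrier R" by simp
    then have "card {\<zero>, \<one>} \<le> q" using fin card_mono by blast
    then show ?thesis by simp
  qed
  have Qpos: "0 < Q" unfolding Q_def cardM using q1 by simp
  have QQ: "Q = real q ^ (n\<^sup>2)" unfolding Q_def cardM by (simp add: power2_eq_square)
  have finE: "finite EE" and finF: "finite FF" using EM FM finM finite_subset by auto
  have PI0: "0 \<le> PI" unfolding PI_def by (intro prod_nonneg) auto
  have id: "complex_of_nat N = (1 / of_nat (card MM)) * (\<Sum>Xm\<in>MM. G Xm)"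
    unfolding N_def G_def Sx_def Eh_def Fh_def by (rule main_identity[OF AsM BsM EM FM])
  have G0: "G X0 = complex_of_real P"
  proof -
    have "Sx X0 = (\<Prod>l<d. of_nat (card (As l)) * of_nat (card (Bs l)))"
      unfolding Sx_def
    proof (intro prod.cong refl)
      fix l assume "l \<in> {..<d}"
      then have l: "l < d" by simp
      have "(\<Sum>a\<in>As l. \<Sum>b\<in>Bs l. ch X0 (mat_mult R n a b)) = (\<Sum>a\<in>As l. \<Sum>b\<in>Bs l. 1)"
        unfolding X0_def using AsM[OF l] BsM[OF l] by (intro sum.cong refl ch_Xzero mat_mult_M) auto
      then show "(\<Sum>a\<in>As l. \<Sum>b\<in>Bs l. ch X0 (mat_mult R n a b)) = of_nat (card (As l)) * of_nat (card (Bs l))"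
        by simp
    qed
    moreover have "Eh X0 = of_nat (card EE)" unfolding Eh_def X0_def using EM
      by (simp add: ch_Xzero subset_iff)
    moreover have "Fh X0 = of_nat (card FF)" unfolding Fh_def X0_def using FM
      by (simp add: ch_Xzero subset_iff)
    ultimately show ?thesis unfolding G_def P_def PI_def by (simp add: mult.commute)
  qed
  have "complex_of_nat N - complex_of_real (P / Q) = (1 / of_nat (card MM)) * (\<Sum>Xm\<in>MM - {X0}. G Xm)"
  proof -
    have "(\<Sum>Xm\<in>MM. G Xm) = G X0 + (\<Sum>Xm\<in>MM - {X0}. G Xm)" using finM X0M by (rule sum.remove)
    then show ?thesis unfolding id G0 using Qpos unfolding Q_def by (simp add: field_simps)
  qed
  then have "\<bar>real N - P / Q\<bar> = cmod ((1 / of_nat (card MM)) * (\<Sum>Xm\<in>MM - {X0}. G Xm))"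
    by (metis norm_of_real of_real_diff of_real_of_nat_eq)
  also have "\<dots> = (1 / Q) * cmod (\<Sum>Xm\<in>MM - {X0}. G Xm)"
    unfolding Q_def by (simp add: norm_mult norm_divide)
  also have "\<dots> \<le> (1 / Q) * (\<Sum>Xm\<in>MM - {X0}. cmod (G Xm))"
    using Qpos by (intro mult_left_mono norm_sum) auto
  also have "\<dots> \<le> (1 / Q) * (\<Sum>Xm\<in>MM - {X0}. K * (cmod (Eh Xm) * cmod (Fh Xm)))"
  proof (intro mult_left_mono sum_mono)
    fix Xm assume Xm: "Xm \<in> MM - {X0}"
    have "cmod (Sx Xm) = (\<Prod>l<d. cmod (\<Sum>a\<in>As l. \<Sum>b\<in>Bs l. ch Xm (mat_mult R n a b)))"
      unfolding Sx_def by (simp add: prod_norm)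
    also have "\<dots> \<le> K" unfolding K_def
    proof (intro prod_mono conjI)
      fix l assume "l \<in> {..<d}"
      then have l: "l < d" by simp
      show "0 \<le> cmod (\<Sum>a\<in>As l. \<Sum>b\<in>Bs l. ch Xm (mat_mult R n a b))" by simp
      show "cmod (\<Sum>a\<in>As l. \<Sum>b\<in>Bs l. ch Xm (mat_mult R n a b)) \<le> sqrt (real (card (As l)) * real (card (Bs l)) * C)"
        unfolding C_def Q_def using pair_bound[OF _ _ AsM[OF l] BsM[OF l], of Xm] Xm X0_def
        by (intro real_le_rsqrt) (auto simp: mult.assoc)
    qed
    finally have "cmod (Sx Xm) \<le> K" .
    then show "cmod (G Xm) \<le> K * (cmod (Eh Xm) * cmod (Fh Xm))"
      unfolding G_def by (simp add: norm_mult mult_right_mono mult.assoc)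
  qed (use Qpos in auto)
  also have "\<dots> \<le> (1 / Q) * (\<Sum>Xm\<in>MM. K * (cmod (Eh Xm) * cmod (Fh Xm)))"
  proof -
    have K0: "0 \<le> K" unfolding K_def using C0 by (intro prod_nonneg) auto
    show ?thesis using Qpos K0 finM by (intro mult_left_mono sum_mono2) auto
  qed
  also have "\<dots> = (1 / Q) * K * (\<Sum>Xm\<in>MM. cmod (Eh Xm) * cmod (Fh Xm))"
    by (simp add: sum_distrib_left mult.assoc)
  also have "\<dots> \<le> (1 / Q) * K * (Q * sqrt (real (card EE) * real (card FF)))"
  proof -
    have K0: "0 \<le> K" unfolding K_def using C0 by (intro prod_nonneg) auto
    have "(\<Sum>Xm\<in>MM. cmod (Eh Xm) * cmod (Fh Xm))
        \<le> sqrt ((\<Sum>Xm\<in>MM. (cmod (Eh Xm))^2) * (\<Sum>Xm\<in>MM. (cmod (Fh Xm))^2))"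
      by (intro real_le_rsqrt my_CS)
    also have "\<dots> = sqrt ((Q * real (card EE)) * (Q * real (card FF)))"
      unfolding Eh_def Fh_def Q_def using hat_sq[OF EM] hat_sq[OF FM] by simp
    also have "\<dots> = Q * sqrt (real (card EE) * real (card FF))"
      using Qpos by (simp add: real_sqrt_mult mult.assoc mult.left_commute)
    finally show ?thesis using Qpos K0 by (intro mult_left_mono) auto
  qed
  also have "\<dots> = K * sqrt (real (card EE) * real (card FF))" using Qpos by simp
  also have "K = sqrt PI * sqrt C ^ d"
    unfolding K_def PI_def by (simp add: real_sqrt_mult prod.distrib sqrt_prod)
  also have "sqrt PI * sqrt C ^ d * sqrt (real (card EE) * real (card FF)) = sqrt C ^ d * sqrt P"
    unfolding P_def by (simp add: real_sqrt_mult mult.commute mult.left_commute)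
  also have "\<dots> \<le> real q powr (real d * real n ^ 2 - (real d - 1) * real n / 2 - 1 / 2) * sqrt P"
  proof (rule mult_right_mono)
    show "sqrt C ^ d \<le> real q powr (real d * real n ^ 2 - (real d - 1) * real n / 2 - 1 / 2)"
      unfolding C_def Q_def cardM using powr_part[OF q1 n1] by simp
  qed (simp add: P_def PI0)
  finally show ?thesis unfolding N_def P_def PI_def QQ .
qed

end

theorem theorem1p2:
  fixes d n :: nat
  assumes "d \<ge> 1" and "n \<ge> 2"
  shows "\<exists>C::real. C > 0 \<and>
    (\<forall>(R :: 'a ring) (As :: nat \<Rightarrow> 'a mat set) (Bs :: nat \<Rightarrow> 'a mat set) (\<E> :: 'a mat set) (\<F> :: 'a mat set).
       field R \<and> finite (carrier R) \<and> odd (card (carrier R)) \<and>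
       (\<forall>i<d. As i \<subseteq> mat_set R n \<and> Bs i \<subseteq> mat_set R n) \<and>
       \<E> \<subseteq> mat_set R n \<and> \<F> \<subseteq> mat_set R n \<longrightarrow>
       (let q = real (card (carrier R));
            P = real (card \<E>) * real (card \<F>) * (\<Prod>i<d. real (card (As i)) * real (card (Bs i)));
            N = real (card {(A, B, E, F).
                   A \<in> (\<Pi>\<^sub>E i\<in>{..<d}. As i) \<and> B \<in> (\<Pi>\<^sub>E i\<in>{..<d}. Bs i) \<and>
                   E \<in> \<E> \<and> F \<in> \<F> \<and>
                   mat_sum R n (\<lambda>i. mat_mult R n (A i) (B i)) d = mat_add R n E F})
        in \<bar>N - P / q ^ (n\<^sup>2)\<bar>
             \<le> C * q powr (real d * real n ^ 2 - (real d - 1) * real n / 2 - 1 / 2) * sqrt P))"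
proof -
  have "\<forall>(R :: 'a ring) (As :: nat \<Rightarrow> 'a mat set) (Bs :: nat \<Rightarrow> 'a mat set) (\<E> :: 'a mat set) (\<F> :: 'a mat set).
       field R \<and> finite (carrier R) \<and> odd (card (carrier R)) \<and>
       (\<forall>i<d. As i \<subseteq> mat_set R n \<and> Bs i \<subseteq> mat_set R n) \<and>
       \<E> \<subseteq> mat_set R n \<and> \<F> \<subseteq> mat_set R n \<longrightarrow>
       (let q = real (card (carrier R));
            P = real (card \<E>) * real (card \<F>) * (\<Prod>i<d. real (card (As i)) * real (card (Bs i)));
            N = real (card {(A, B, E, F).
                   A \<in> (\<Pi>\<^sub>E i\<in>{..<d}. As i) \<and> B \<in> (\<Pi>\<^sub>E i\<in>{..<d}. Bs i) \<and>
                   E \<in> \<E> \<and> F \<in> \<F> \<and>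
                   mat_sum R n (\<lambda>i. mat_mult R n (A i) (B i)) d = mat_add R n E F})
        in \<bar>N - P / q ^ (n\<^sup>2)\<bar>
             \<le> 1 * q powr (real d * real n ^ 2 - (real d - 1) * real n / 2 - 1 / 2) * sqrt P)"
  proof (intro allI impI)
    fix R :: "'a ring" and As Bs :: "nat \<Rightarrow> 'a mat set" and EE FF :: "'a mat set"
    assume h: "field R \<and> finite (carrier R) \<and> odd (card (carrier R)) \<and>
       (\<forall>i<d. As i \<subseteq> mat_set R n \<and> Bs i \<subseteq> mat_set R n) \<and>
       EE \<subseteq> mat_set R n \<and> FF \<subseteq> mat_set R n"
    then have fR: "field R" and fin: "finite (carrier R)" by auto
    obtain psi :: "'a \<Rightarrow> complex" and g where
      ps: "\<forall>x\<in>carrier R. \<forall>y\<in>carrier R. psi (x \<oplus>\<^bsub>R\<^esub> y) = psi x * psi y"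
          "\<forall>x\<in>carrier R. cmod (psi x) = 1" "g \<in> carrier R" "psi g \<noteq> 1"
      using field.add_char_exists[OF fR fin] by blast
    interpret fchar R psi n g
      using fR fin ps by (simp add: fchar_def fchar_axioms_def)
    have "\<bar>real (card {(A, B, E, F).
                   A \<in> (\<Pi>\<^sub>E i\<in>{..<d}. As i) \<and> B \<in> (\<Pi>\<^sub>E i\<in>{..<d}. Bs i) \<and>
                   E \<in> EE \<and> F \<in> FF \<and>
                   mat_sum R n (\<lambda>i. mat_mult R n (A i) (B i)) d = mat_add R n E F})
         - (real (card EE) * real (card FF) * (\<Prod>i<d. real (card (As i)) * real (card (Bs i)))) / real (card (carrier R)) ^ (n\<^sup>2)\<bar>
      \<le> real (card (carrier R)) powr (real d * real n ^ 2 - (real d - 1) * real n / 2 - 1 / 2)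
         * sqrt (real (card EE) * real (card FF) * (\<Prod>i<d. real (card (As i)) * real (card (Bs i))))"
      by (rule main_bound) (use h assms in auto)
    then show "let q = real (card (carrier R));
            P = real (card EE) * real (card FF) * (\<Prod>i<d. real (card (As i)) * real (card (Bs i)));
            N = real (card {(A, B, E, F).
                   A \<in> (\<Pi>\<^sub>E i\<in>{..<d}. As i) \<and> B \<in> (\<Pi>\<^sub>E i\<in>{..<d}. Bs i) \<and>
                   E \<in> EE \<and> F \<in> FF \<and>
                   mat_sum R n (\<lambda>i. mat_mult R n (A i) (B i)) d = mat_add R n E F})
        in \<bar>N - P / q ^ (n\<^sup>2)\<bar>
             \<le> 1 * q powr (real d * real n ^ 2 - (real d - 1) * real n / 2 - 1 / 2) * sqrt P"
      by (simp add: Let_def)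
  qed
  then show ?thesis by (intro exI[of _ "1::real"]) simp
qed

end
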